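(* The multiplicative semigroup $(\mathbb N,\cdot)$ of positive integers is left and right fairly amenable.
   Context: For a semigroup $U$, $s\in U$, $A\subseteq U$: $s$ acts injectively on the left (right) of $A$ if $a\mapsto sa$ ($a\mapsto as$) is injective on $A$. A finitely-additive probability measure on $U$ is $\mu:\mathcal P(U)\to[0,1]$ with $\mu(U)=1$, additive on disjoint sets; it is left fairly invariant if $\mu(sA)=\mu(A)$ whenever $s$ acts injectively on the left of $A$ (right fairly invariant analogously with $As$). $U$ is left (right) fairly amenable if such a measure exists. *)

theory Defs
  imports Complex_Main
begin

definition fa_prob_measure :: "'a set \<Rightarrow> ('a set \<Rightarrow> real) \<Rightarrow> bool" where
  "fa_prob_measure U \<mu> \<longleftrightarrow>
     (\<forall>A. A \<subseteq> U \<longrightarrow> 0 \<le> \<mu> A \<and> \<mu> A \<le> 1) \<and> \<mu> U = 1 \<and>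
     (\<forall>A B. A \<subseteq> U \<longrightarrow> B \<subseteq> U \<longrightarrow> A \<inter> B = {} \<longrightarrow> \<mu> (A \<union> B) = \<mu> A + \<mu> B)"

definition left_fairly_invariant :: "'a set \<Rightarrow> ('a \<Rightarrow> 'a \<Rightarrow> 'a) \<Rightarrow> ('a set \<Rightarrow> real) \<Rightarrow> bool" where
  "left_fairly_invariant U f \<mu> \<longleftrightarrow>
     (\<forall>s\<in>U. \<forall>A. A \<subseteq> U \<longrightarrow> inj_on (\<lambda>a. f s a) A \<longrightarrow> \<mu> ((\<lambda>a. f s a) ` A) = \<mu> A)"

definition right_fairly_invariant :: "'a set \<Rightarrow> ('a \<Rightarrow> 'a \<Rightarrow> 'a) \<Rightarrow> ('a set \<Rightarrow> real) \<Rightarrow> bool" where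
  "right_fairly_invariant U f \<mu> \<longleftrightarrow>
     (\<forall>s\<in>U. \<forall>A. A \<subseteq> U \<longrightarrow> inj_on (\<lambda>a. f a s) A \<longrightarrow> \<mu> ((\<lambda>a. f a s) ` A) = \<mu> A)"

definition left_fairly_amenable :: "'a set \<Rightarrow> ('a \<Rightarrow> 'a \<Rightarrow> 'a) \<Rightarrow> bool" where
  "left_fairly_amenable U f \<longleftrightarrow>
     (\<exists>\<mu>. fa_prob_measure U \<mu> \<and> left_fairly_invariant U f \<mu>)"

definition right_fairly_amenable :: "'a set \<Rightarrow> ('a \<Rightarrow> 'a \<Rightarrow> 'a) \<Rightarrow> bool" where
  "right_fairly_amenable U f \<longleftrightarrow>
     (\<exists>\<mu>. fa_prob_measure U \<mu> \<and> right_fairly_invariant U f \<mu>)"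

end

theory Submission
  imports Defs "HOL-Analysis.Analysis" "HOL-Computational_Algebra.Primes"
begin


lemma cluster_exists:
  fixes d :: "nat \<Rightarrow> (nat set \<Rightarrow> real)"
  assumes "\<And>m A. d m A \<in> {0..1}"
  shows "\<exists>\<mu>. inf (nhds \<mu>) (filtermap d sequentially) \<noteq> bot"
proof -
  have "compactin (product_topology (\<lambda>_. euclidean) UNIV) (PiE UNIV (\<lambda>_::nat set. {0..1::real}))"
    by (simp add: compactin_PiE)
  hence c: "compact (PiE UNIV (\<lambda>_::nat set. {0..1::real}))"
    by (simp add: euclidean_product_topology compactin_euclidean_iff)
  have "filtermap d sequentially \<noteq> bot" by (simp add: filtermap_bot_iff)
  moreover have "eventually (\<lambda>x. x \<in> PiE UNIV (\<lambda>_::nat set. {0..1::real})) (filtermap d sequentially)"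
    using assms by (simp add: eventually_filtermap PiE_iff)
  ultimately show ?thesis using c unfolding compact_filter by blast
qed

lemma cluster_value:
  fixes d :: "nat \<Rightarrow> (nat set \<Rightarrow> real)" and \<phi> :: "(nat set \<Rightarrow> real) \<Rightarrow> real"
  assumes cl: "inf (nhds \<mu>) (filtermap d sequentially) \<noteq> bot"
    and cont: "continuous_on UNIV \<phi>"
    and lim: "((\<lambda>m. \<phi> (d m)) \<longlongrightarrow> c) sequentially"
  shows "\<phi> \<mu> = c"
proof (rule ccontr)
  assume ne: "\<phi> \<mu> \<noteq> c"
  define e where "e = dist (\<phi> \<mu>) c / 2"
  have e: "e > 0" using ne by (simp add: e_def)
  have op: "open (\<phi> -` ball (\<phi> \<mu>) e)" using cont open_vimage open_ball by blast
  have mem: "\<mu> \<in> \<phi> -` ball (\<phi> \<mu>) e" using e by simp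
  have e1: "eventually (\<lambda>\<nu>. \<nu> \<in> \<phi> -` ball (\<phi> \<mu>) e) (nhds \<mu>)"
    using eventually_nhds_in_open[OF op mem] .
  have e2: "eventually (\<lambda>\<nu>. dist (\<phi> \<nu>) c < e) (filtermap d sequentially)"
    using tendstoD[OF lim e] by (simp add: eventually_filtermap)
  have e3: "eventually (\<lambda>\<nu>. \<nu> \<in> \<phi> -` ball (\<phi> \<mu>) e \<and> dist (\<phi> \<nu>) c < e) (inf (nhds \<mu>) (filtermap d sequentially))"
    using e1 e2 eventually_inf by blast
  have no: "\<And>\<nu>. \<not> (\<nu> \<in> \<phi> -` ball (\<phi> \<mu>) e \<and> dist (\<phi> \<nu>) c < e)"
  proof
    fix \<nu> assume h: "\<nu> \<in> \<phi> -` ball (\<phi> \<mu>) e \<and> dist (\<phi> \<nu>) c < e"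
    hence "dist (\<phi> \<mu>) (\<phi> \<nu>) < e" by simp
    moreover have "dist (\<phi> \<mu>) c \<le> dist (\<phi> \<mu>) (\<phi> \<nu>) + dist (\<phi> \<nu>) c" by (rule dist_triangle)
    ultimately show False using h e_def by linarith
  qed
  have "eventually (\<lambda>\<nu>. False) (inf (nhds \<mu>) (filtermap d sequentially))"
    using e3 no eventually_mono by blast
  thus False using cl by (simp add: eventually_False)
qed


lemma count_bound:
  fixes p N k :: nat
  assumes p: "prime p" and N: "N > 0" and k: "p^k dvd N"
  shows "(k+1) * card {a. a dvd N \<and> \<not> p*a dvd N} \<le> card {a. a dvd N}"
proof -
  have p0: "p \<noteq> 0" and pu: "\<not> is_unit p" using p by (auto simp: prime_gt_0_nat)
  have pe: "prime_elem p" using p by simp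
  define e where "e = multiplicity p N"
  have ke: "k \<le> e" unfolding e_def using multiplicity_geI[OF _ _ k] N pu by simp
  define T where "T j = {a. a dvd N \<and> multiplicity p a = j}" for j
  have fin: "finite {a. a dvd N}" using N by simp
  have multle: "multiplicity p a \<le> e" if "a dvd N" for a
  proof -
    have "p ^ multiplicity p a dvd N" using multiplicity_dvd that dvd_trans by blast
    thus ?thesis unfolding e_def using multiplicity_geI[of N p] N pu by simp
  qed
  have S: "{a. a dvd N \<and> \<not> p*a dvd N} \<subseteq> T e"
  proof
    fix a assume "a \<in> {a. a dvd N \<and> \<not> p*a dvd N}"
    hence a: "a dvd N" "\<not> p*a dvd N" by auto
    have "multiplicity p a = e"
    proof (rule ccontr)
      assume "multiplicity p a \<noteq> e"
      hence lt: "multiplicity p a < e" using multle a by fastforce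
      obtain c where c: "N = a * c" using a by (auto elim: dvdE)
      have "a \<noteq> 0" "c \<noteq> 0" using c N by auto
      hence "e = multiplicity p a + multiplicity p c"
        unfolding e_def c using prime_elem_multiplicity_mult_distrib[OF pe] by blast
      hence "multiplicity p c \<noteq> 0" using lt by linarith
      hence "p dvd c" by (metis not_dvd_imp_multiplicity_0)
      hence "p * a dvd N" using c by (auto simp: mult.commute mult_dvd_mono)
      thus False using a by blast
    qed
    thus "a \<in> T e" using a by (simp add: T_def)
  qed
  have le: "card (T e) \<le> card (T j)" if j: "j \<le> e" for j
  proof (rule card_inj_on_le)
    show "finite (T j)" using fin unfolding T_def by (rule rev_finite_subset) auto
    have dec: "a = p^(e-j) * (a div p^(e-j))" if "a \<in> T e" for a
    proof -
      have "p ^ e dvd a" using multiplicity_dvd[of p a] that by (simp add: T_def)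
      hence "p^(e-j) dvd a" using le_imp_power_dvd[of "e-j" e p] dvd_trans by fastforce
      thus ?thesis by simp
    qed
    show "inj_on (\<lambda>a. a div p^(e-j)) (T e)"
      by (rule inj_onI) (metis dec)
    show "(\<lambda>a. a div p^(e-j)) ` T e \<subseteq> T j"
    proof
      fix b assume "b \<in> (\<lambda>a. a div p^(e-j)) ` T e"
      then obtain a where a: "a \<in> T e" and b: "b = a div p^(e-j)" by auto
      have ad: "a dvd N" and am: "multiplicity p a = e" using a by (auto simp: T_def)
      have a0: "a \<noteq> 0" using ad N by auto
      have ab: "a = p^(e-j) * b" using dec[OF a] b by simp
      hence b0: "b \<noteq> 0" using a0 by auto
      have "multiplicity p a = (e-j) + multiplicity p b"
        using ab prime_elem_multiplicity_mult_distrib[OF pe, of "p^(e-j)" b] b0 p0 multiplicity_prime_power[OF pe] by simp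
      hence "multiplicity p b = j" using am j by simp
      moreover have "b dvd N" using ab ad by (metis dvd_mult_right)
      ultimately show "b \<in> T j" by (simp add: T_def)
    qed
  qed
  have disj: "\<And>i j. i \<in> {..e} \<Longrightarrow> j \<in> {..e} \<Longrightarrow> i \<noteq> j \<Longrightarrow> T i \<inter> T j = {}"
    by (auto simp: T_def)
  have finT: "\<And>j. finite (T j)" using fin unfolding T_def by (auto intro: rev_finite_subset)
  have "(e+1) * card (T e) = (\<Sum>j\<le>e. card (T e))" by simp
  also have "\<dots> \<le> (\<Sum>j\<le>e. card (T j))" by (rule sum_mono) (simp add: le)
  also have "\<dots> = card (\<Union>j\<le>e. T j)"
    by (rule card_UN_disjoint[symmetric]) (use finT disj in auto)
  also have "\<dots> \<le> card {a. a dvd N}"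
    by (rule card_mono[OF fin]) (auto simp: T_def)
  finally have A: "(e+1) * card (T e) \<le> card {a. a dvd N}" .
  have "card {a. a dvd N \<and> \<not> p*a dvd N} \<le> card (T e)" by (rule card_mono[OF finT S])
  hence "(k+1) * card {a. a dvd N \<and> \<not> p*a dvd N} \<le> (e+1) * card (T e)"
    using ke by (intro mult_le_mono) auto
  with A show ?thesis by linarith
qed

lemma cluster_exists2:
  fixes d :: "nat \<Rightarrow> (nat set \<Rightarrow> real)"
  assumes "\<And>m A. d m A \<in> {0..1}"
  shows "\<exists>\<mu>. (\<forall>A. \<mu> A \<in> {0..1}) \<and> inf (nhds \<mu>) (filtermap d sequentially) \<noteq> bot"
proof -
  have "compactin (product_topology (\<lambda>_. euclidean) UNIV) (PiE UNIV (\<lambda>_::nat set. {0..1::real}))"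
    by (simp add: compactin_PiE)
  hence c: "compact (PiE UNIV (\<lambda>_::nat set. {0..1::real}))"
    by (simp add: euclidean_product_topology compactin_euclidean_iff)
  have "filtermap d sequentially \<noteq> bot" by (simp add: filtermap_bot_iff)
  moreover have "eventually (\<lambda>x. x \<in> PiE UNIV (\<lambda>_::nat set. {0..1::real})) (filtermap d sequentially)"
    using assms by (simp add: eventually_filtermap PiE_iff)
  ultimately obtain \<mu> where "\<mu> \<in> PiE UNIV (\<lambda>_::nat set. {0..1::real})"
     "inf (nhds \<mu>) (filtermap d sequentially) \<noteq> bot"
    using c unfolding compact_filter by blast
  thus ?thesis by (auto simp: PiE_iff)
qed

definition NN :: "nat \<Rightarrow> nat" where "NN m = fact m ^ m"
definition DD :: "nat \<Rightarrow> nat set" where "DD m = {a. a dvd NN m}"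
definition dens :: "nat \<Rightarrow> nat set \<Rightarrow> real" where
  "dens m A = real (card (A \<inter> DD m)) / real (card (DD m))"

lemma NN_pos: "NN m > 0" by (simp add: NN_def)
lemma DD_fin: "finite (DD m)" using NN_pos by (simp add: DD_def)
lemma DD_card: "card (DD m) > 0"
proof -
  have "1 \<in> DD m" by (simp add: DD_def)
  thus ?thesis using DD_fin card_gt_0_iff by blast
qed
lemma DD_pos: "DD m \<subseteq> {n. 0 < n}" using NN_pos by (auto simp: DD_def intro: dvd_pos_nat)

lemma dens_bounds: "dens m A \<in> {0..1}"
proof -
  have "card (A \<inter> DD m) \<le> card (DD m)" by (rule card_mono[OF DD_fin]) auto
  thus ?thesis using DD_card by (simp add: dens_def)
qed

lemma dens_add: "A \<inter> B = {} \<Longrightarrow> dens m (A \<union> B) = dens m A + dens m B"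
proof -
  assume "A \<inter> B = {}"
  hence "card ((A \<union> B) \<inter> DD m) = card (A \<inter> DD m) + card (B \<inter> DD m)"
    using DD_fin by (subst card_Un_disjoint[symmetric]) (auto simp: Int_Un_distrib2)
  thus ?thesis by (simp add: dens_def add_divide_distrib)
qed

lemma dens_U: "dens m {n. 0 < n} = 1"
proof -
  have "{n::nat. 0 < n} \<inter> DD m = DD m" using DD_pos by auto
  thus ?thesis using DD_card by (simp add: dens_def)
qed

lemma dens_prime:
  assumes p: "prime p"
  shows "((\<lambda>m. dens m ((\<lambda>a. p*a) ` A) - dens m A) \<longlongrightarrow> 0) sequentially"
proof (rule Lim_null_comparison)
  show "(\<lambda>m. inverse (real (Suc m))) \<longlonglongrightarrow> 0" by (rule LIMSEQ_inverse_real_of_nat)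
  show "\<forall>\<^sub>F m in sequentially. norm (dens m ((\<lambda>a. p*a) ` A) - dens m A) \<le> inverse (real (Suc m))"
    unfolding eventually_sequentially
  proof (intro exI allI impI)
    fix m assume pm: "p \<le> m"
    define N where "N = NN m"
    define D where "D = DD m"
    have N0: "N > 0" using NN_pos N_def by simp
    have "p dvd fact m" using pm p dvd_fact[of p m] prime_ge_1_nat by blast
    hence pk: "p^m dvd N" unfolding N_def NN_def by (simp add: dvd_power_same)
    define S where "S = {a. a dvd N \<and> \<not> p*a dvd N}"
    have cb: "(m+1) * card S \<le> card D"
      using count_bound[OF p N0 pk] unfolding S_def D_def DD_def N_def by simp
    define B where "B = {a\<in>A. p*a dvd N}"
    have p0: "p > 0" using p prime_gt_0_nat by blast
    have img: "(\<lambda>a. p*a) ` A \<inter> D = (\<lambda>a. p*a) ` B"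
      unfolding B_def D_def DD_def N_def by auto
    have finD: "finite D" using DD_fin D_def by simp
    have c1: "card ((\<lambda>a. p*a) ` A \<inter> D) = card B"
      unfolding img using p0 by (intro card_image inj_onI) auto
    have BAD: "B \<subseteq> A \<inter> D" unfolding B_def D_def DD_def N_def
      by (auto intro: dvd_mult_right)
    have finAD: "finite (A \<inter> D)" using finD by simp
    have c2: "card (A \<inter> D) = card B + card ((A \<inter> D) - B)"
      using card_Diff_subset[OF rev_finite_subset[OF finAD BAD] BAD] card_mono[OF finAD BAD] by simp
    have "(A \<inter> D) - B \<subseteq> S" unfolding B_def S_def D_def DD_def N_def by auto
    hence c3: "card ((A \<inter> D) - B) \<le> card S" using finD unfolding S_def
      by (intro card_mono) (auto simp: N0)
    have Dp: "real (card D) > 0" using DD_card D_def by simp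
    have "norm (dens m ((\<lambda>a. p*a) ` A) - dens m A) = real (card ((A \<inter> D) - B)) / real (card D)"
      unfolding dens_def D_def[symmetric] c1 c2 using Dp by (simp add: diff_divide_distrib[symmetric])
    also have "\<dots> \<le> real (card S) / real (card D)"
      using c3 Dp by (simp add: divide_right_mono)
    also have "\<dots> \<le> inverse (real (Suc m))"
    proof -
      have "real (Suc m) * real (card S) \<le> real (card D)" using cb
        by (metis Suc_eq_plus1 of_nat_le_iff of_nat_mult)
      thus ?thesis using Dp by (simp add: field_simps)
    qed
    finally show "norm (dens m ((\<lambda>a. p*a) ` A) - dens m A) \<le> inverse (real (Suc m))" .
  qed
qed

lemma dens_all:
  fixes s :: nat
  assumes "0 < s"
  shows "\<forall>A. ((\<lambda>m. dens m ((\<lambda>a. s*a) ` A) - dens m A) \<longlongrightarrow> 0) sequentially"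
  using assms
proof (induction s rule: less_induct)
  case (less s)
  show ?case
  proof (cases "s = 1")
    case True thus ?thesis by simp
  next
    case False
    then obtain p where p: "prime p" "p dvd s" using prime_factor_nat by blast
    then obtain t where t: "s = p * t" by (auto elim: dvdE)
    have t0: "0 < t" using less.prems t by simp
    have "p > 1" using p prime_gt_1_nat by blast
    hence ts: "t < s" using t t0 by simp
    show ?thesis
    proof
      fix A
      have IH: "((\<lambda>m. dens m ((\<lambda>a. t*a) ` A) - dens m A) \<longlongrightarrow> 0) sequentially"
        using less.IH[OF ts t0] by blast
      have P: "((\<lambda>m. dens m ((\<lambda>a. p*a) ` ((\<lambda>a. t*a) ` A)) - dens m ((\<lambda>a. t*a) ` A)) \<longlongrightarrow> 0) sequentially"
        by (rule dens_prime[OF p(1)])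
      have eq: "(\<lambda>a. s*a) ` A = (\<lambda>a. p*a) ` ((\<lambda>a. t*a) ` A)"
        by (simp add: t image_image mult.assoc)
      show "((\<lambda>m. dens m ((\<lambda>a. s*a) ` A) - dens m A) \<longlongrightarrow> 0) sequentially"
        using tendsto_add[OF P IH] unfolding eq by simp
    qed
  qed
qed

lemma cont_coord: "continuous_on UNIV (\<lambda>\<nu>::nat set \<Rightarrow> real. \<nu> A)"
  by simp

theorem mainTheorem18:
  shows "left_fairly_amenable {n::nat. 0 < n} (\<lambda>x y. x * y) \<and>
         right_fairly_amenable {n::nat. 0 < n} (\<lambda>x y. x * y)"
proof -
  obtain \<mu> where mu01: "\<And>A. \<mu> A \<in> {0..1}"
    and cl: "inf (nhds \<mu>) (filtermap dens sequentially) \<noteq> bot"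
    using cluster_exists2[of dens] dens_bounds by blast
  have U1: "\<mu> {n. 0 < n} = 1"
    using cluster_value[OF cl cont_coord, of "{n. 0 < n}" 1] dens_U by simp
  have add: "\<mu> (A \<union> B) = \<mu> A + \<mu> B" if "A \<inter> B = {}" for A B
  proof -
    have c: "continuous_on UNIV (\<lambda>\<nu>::nat set \<Rightarrow> real. \<nu> (A \<union> B) - \<nu> A - \<nu> B)"
      by (intro continuous_on_diff cont_coord)
    have "(\<lambda>\<nu>::nat set \<Rightarrow> real. \<nu> (A \<union> B) - \<nu> A - \<nu> B) \<mu> = 0"
      by (rule cluster_value[OF cl c]) (simp add: dens_add[OF that])
    thus ?thesis by simp
  qed
  have inv: "\<mu> ((\<lambda>a. s*a) ` A) = \<mu> A" if "0 < s" for s A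
  proof -
    have c: "continuous_on UNIV (\<lambda>\<nu>::nat set \<Rightarrow> real. \<nu> ((\<lambda>a. s*a) ` A) - \<nu> A)"
      by (intro continuous_on_diff cont_coord)
    have "(\<lambda>\<nu>::nat set \<Rightarrow> real. \<nu> ((\<lambda>a. s*a) ` A) - \<nu> A) \<mu> = 0"
      by (rule cluster_value[OF cl c]) (use dens_all[OF that] in simp)
    thus ?thesis by simp
  qed
  have fa: "fa_prob_measure {n::nat. 0 < n} \<mu>"
    unfolding fa_prob_measure_def using mu01 U1 add by auto
  have L: "left_fairly_invariant {n::nat. 0 < n} (\<lambda>x y. x * y) \<mu>"
    unfolding left_fairly_invariant_def using inv by auto
  have R: "right_fairly_invariant {n::nat. 0 < n} (\<lambda>x y. x * y) \<mu>"
    unfolding right_fairly_invariant_def using inv by (auto simp: mult.commute)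
  show ?thesis unfolding left_fairly_amenable_def right_fairly_amenable_def
    using fa L R by blast
qed

end
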